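(* Let $\mathfrak{B}$ be a finite cyclic group, of order at least $3$, of invertible diagonal $2\times2$ complex matrices, containing three pairwise linearly independent matrices. Let $n\ge3$ and let $F$ be a Boolean function of arity $2n$ such that every function of arity less than $2n$ realizable by a gadget of $\#(\{F\}\cup\mathfrak{B})$ lies in $\lambda\langle\mathfrak{B}\rangle$. Then either $F$ is the zero function, or there exist four distinct variables $x,y,z,w$ of $F$ such that $F^{xyzw}_{0000}$ is a nonzero function.
   Context: Matrices in $\mathfrak{B}$ are binary functions $M(u,v)=M_{uv}$. $\#\mathcal{G}$: input a finite multigraph whose vertices carry functions from $\mathcal{G}$ of arity equal to the degree (edges act as binary equality); output the sum over $\{0,1\}$-edge assignments of the product of vertex functions. Gadgets are such networks with dangling edges; realizable functions are their functions. $\langle\mathfrak{B}\rangle$ is the set of functions $x\mapsto\prod_{j=1}^m M_j(x_{\pi(2j-1)},x_{\pi(2j)})$ with $\pi$ a permutation of the $2m$ variables and $M_j\in\mathfrak{B}$; $\lambda\langle\mathfrak{B}\rangle=\{\lambda f:\lambda\in\mathbb{C},f\in\langle\mathfrak{B}\rangle\}$. $F^{xyzw}_{0000}$ is the arity-$(2n-4)$ function obtained from $F$ by fixing $x=y=z=w=0$. *)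

theory Defs
  imports Complex_Main
begin

text \<open>Boolean functions: a function of arity k is a map bool list => complex,
  only its values on lists of length k matter (False = 0, True = 1).
  A signature is a pair (arity, function).\<close>

type_synonym bfun = "bool list \<Rightarrow> complex"
type_synonym sig = "nat \<times> bfun"

text \<open>2x2 matrices as binary functions M(u,v) = M_uv.\<close>
type_synonym mat2 = "bool \<Rightarrow> bool \<Rightarrow> complex"

definition mmult :: "mat2 \<Rightarrow> mat2 \<Rightarrow> mat2" where
  "mmult A B = (\<lambda>u v. A u False * B False v + A u True * B True v)"

definition mone :: mat2 where
  "mone = (\<lambda>u v. if u = v then 1 else 0)"

fun mpow :: "mat2 \<Rightarrow> nat \<Rightarrow> mat2" where
  "mpow g 0 = mone"
| "mpow g (Suc k) = mmult g (mpow g k)"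

definition diag_invertible :: "mat2 \<Rightarrow> bool" where
  "diag_invertible M \<longleftrightarrow> M False True = 0 \<and> M True False = 0 \<and>
     M False False \<noteq> 0 \<and> M True True \<noteq> 0"

definition lin_indep2 :: "mat2 \<Rightarrow> mat2 \<Rightarrow> bool" where
  "lin_indep2 A B \<longleftrightarrow>
     (\<forall>a b::complex. (\<forall>u v. a * A u v + b * B u v = 0) \<longrightarrow> a = 0 \<and> b = 0)"

definition mat_sig :: "mat2 \<Rightarrow> sig" where
  "mat_sig M = (2, \<lambda>xs. M (xs ! 0) (xs ! 1))"

definition in_lamB :: "mat2 set \<Rightarrow> nat \<Rightarrow> bfun \<Rightarrow> bool" where
  "in_lamB B k f \<longleftrightarrow>
    (\<exists>m (lam::complex) \<pi> Ms. k = 2 * m \<and> bij_betw \<pi> {..<2*m} {..<2*m} \<and>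
       length Ms = m \<and> set Ms \<subseteq> B \<and>
       (\<forall>xs. length xs = k \<longrightarrow>
          f xs = lam * (\<Prod>j<m. (Ms ! j) (xs ! \<pi> (2*j)) (xs ! \<pi> (2*j+1)))))"

text \<open>Vertices carry signatures; each vertex v has ports 0..arity-1.
  Every port is attached to a wire. Wires 0..<gdang are the dangling edges
  (the i-th dangling edge is the i-th input variable) and each is attached to
  exactly one port; wires gdang..<gdang+gint are internal edges, each attached
  to exactly two ports (self-loops and parallel edges allowed: multigraph).\<close>
record gadget =
  gverts :: "sig list"
  gdang :: nat
  gint :: nat
  gwire :: "nat \<Rightarrow> nat \<Rightarrow> nat"

definition ports :: "gadget \<Rightarrow> (nat \<times> nat) set" where
  "ports g = {(v, i). v < length (gverts g) \<and> i < fst (gverts g ! v)}"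

definition wire_ports :: "gadget \<Rightarrow> nat \<Rightarrow> (nat \<times> nat) set" where
  "wire_ports g j = {p \<in> ports g. gwire g (fst p) (snd p) = j}"

definition gadget_wf :: "sig set \<Rightarrow> gadget \<Rightarrow> bool" where
  "gadget_wf G g \<longleftrightarrow>
     set (gverts g) \<subseteq> G \<and>
     (\<forall>p \<in> ports g. gwire g (fst p) (snd p) < gdang g + gint g) \<and>
     (\<forall>j < gdang g. card (wire_ports g j) = 1) \<and>
     (\<forall>j. gdang g \<le> j \<and> j < gdang g + gint g \<longrightarrow> card (wire_ports g j) = 2)"

definition gadget_fn :: "gadget \<Rightarrow> bfun" where
  "gadget_fn g xs =
     (\<Sum>ys \<in> {ys. length ys = gint g}.
        \<Prod>v < length (gverts g).
          snd (gverts g ! v) (map (\<lambda>i. (xs @ ys) ! gwire g v i) [0..<fst (gverts g ! v)]))"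

end

theory Submission
  imports Defs
begin

lemma lamB_zero:
  assumes "in_lamB B k f" "\<forall>M\<in>B. diag_invertible M" "f (replicate k False) = 0" "length xs = k"
  shows "f xs = 0"
proof -
  obtain m lam \<pi> Ms where k: "k = 2*m" and bij: "bij_betw \<pi> {..<2*m} {..<2*m}" and
    len: "length Ms = m" and sub: "set Ms \<subseteq> B" and
    f: "\<forall>xs. length xs = k \<longrightarrow> f xs = lam * (\<Prod>j<m. (Ms ! j) (xs ! \<pi> (2*j)) (xs ! \<pi> (2*j+1)))"
    using assms(1) unfolding in_lamB_def by blast
  have "\<forall>j<m. (Ms ! j) False False \<noteq> 0"
    using sub len assms(2) unfolding diag_invertible_def by (metis nth_mem subsetD)
  moreover have "\<forall>j<m. \<pi> (2*j) < k \<and> \<pi> (2*j+1) < k"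
    using bij k unfolding bij_betw_def by auto
  ultimately have "(\<Prod>j<m. (Ms ! j) (replicate k False ! \<pi> (2*j)) (replicate k False ! \<pi> (2*j+1))) \<noteq> 0"
    by (simp add: prod_zero_iff)
  with f assms(3) have "lam = 0" by simp
  with f assms(4) show ?thesis by simp
qed

lemma four:
  assumes "finite S" "4 \<le> card S"
  shows "\<exists>x y z w. x\<in>S \<and> y\<in>S \<and> z\<in>S \<and> w\<in>S \<and> distinct [x,y,z,w]"
proof -
  obtain T where "T \<subseteq> S" "card T = 4" using assms obtain_subset_with_card_n by metis
  then show ?thesis
    by (clarsimp simp: card_Suc_eq numeral_eq_Suc) blast
qed



theorem mainTheorem14:
  fixes B :: "mat2 set" and F :: bfun and n :: nat
  assumes fin: "finite B"
    and cyc: "\<exists>g. B = range (mpow g)"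
    and diag: "\<forall>M \<in> B. diag_invertible M"
    and ord3: "card B \<ge> 3"
    and indep: "\<exists>M1 \<in> B. \<exists>M2 \<in> B. \<exists>M3 \<in> B.
                  lin_indep2 M1 M2 \<and> lin_indep2 M1 M3 \<and> lin_indep2 M2 M3"
    and n3: "n \<ge> 3"
    and closed: "\<forall>g. gadget_wf (insert (2 * n, F) (mat_sig ` B)) g \<and> gdang g < 2 * n
                   \<longrightarrow> in_lamB B (gdang g) (gadget_fn g)"
  shows "(\<forall>xs. length xs = 2 * n \<longrightarrow> F xs = 0) \<or>
         (\<exists>x y z w. x < 2 * n \<and> y < 2 * n \<and> z < 2 * n \<and> w < 2 * n \<and>
            distinct [x, y, z, w] \<and>
            (\<exists>xs. length xs = 2 * n \<and> \<not> xs ! x \<and> \<not> xs ! y \<and> \<not> xs ! z \<and> \<not> xs ! w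
                  \<and> F xs \<noteq> 0))"
proof (rule ccontr)
  define N where "N = 2 * n"
  assume neg: "\<not> ?thesis"
  hence nz: "\<exists>xs. length xs = N \<and> F xs \<noteq> 0" unfolding N_def by blast
  have H: "\<And>x y z w xs. x < N \<Longrightarrow> y < N \<Longrightarrow> z < N \<Longrightarrow> w < N \<Longrightarrow> distinct [x,y,z,w] \<Longrightarrow>
      length xs = N \<Longrightarrow> \<not> xs ! x \<Longrightarrow> \<not> xs ! y \<Longrightarrow> \<not> xs ! z \<Longrightarrow> \<not> xs ! w \<Longrightarrow> F xs = 0"
    using neg unfolding N_def by (simp add: not_ex) (metis length_0_conv)
  define zc where "zc L = card {k. k < N \<and> \<not> L ! k}" for L :: "bool list"
  have Z4: "F L = 0" if LL: "length L = N" "4 \<le> zc L" for L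
  proof -
    have fin: "finite {k. k < N \<and> \<not> L ! k}" by simp
    obtain x y z w where "x \<in> {k. k < N \<and> \<not> L ! k}" "y \<in> {k. k < N \<and> \<not> L ! k}"
      "z \<in> {k. k < N \<and> \<not> L ! k}" "w \<in> {k. k < N \<and> \<not> L ! k}" "distinct [x,y,z,w]"
      using four[of "{k. k < N \<and> \<not> L ! k}"] LL(2) fin unfolding zc_def by blast
    then show ?thesis using H[of x y z w L] LL by auto
  qed
  have zcb: "zc L < Suc N" for L
  proof -
    have "{k. k < N \<and> \<not> L ! k} \<subseteq> {..<N}" by auto
    hence "zc L \<le> card {..<N}" unfolding zc_def by (rule card_mono[rotated]) simp
    thus ?thesis by simp
  qed
  obtain xs0 where xs0: "length xs0 = N \<and> F xs0 \<noteq> 0" using nz by blast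
  have "\<exists>x. (length x = N \<and> F x \<noteq> 0) \<and> (\<forall>y. (length y = N \<and> F y \<noteq> 0) \<longrightarrow> zc y \<le> zc x)"
    by (rule ex_has_greatest_nat[where P="\<lambda>L. length L = N \<and> F L \<noteq> 0" and f=zc and b="Suc N", OF xs0])
       (simp add: zcb)
  then obtain xs where xs: "length xs = N" "F xs \<noteq> 0"
    and mx: "\<And>L. length L = N \<Longrightarrow> F L \<noteq> 0 \<Longrightarrow> zc L \<le> zc xs"
    by blast
  have z3: "zc xs \<le> 3" using Z4 xs by force
  have part: "{..<N} = {k. k < N \<and> \<not> xs ! k} \<union> {k. k < N \<and> xs ! k}" by auto
  have "N \<le> zc xs + card {k. k < N \<and> xs ! k}"
  proof -
    have "N = card ({k. k < N \<and> \<not> xs ! k} \<union> {k. k < N \<and> xs ! k})" using part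
      by (metis card_lessThan)
    also have "\<dots> \<le> zc xs + card {k. k < N \<and> xs ! k}" unfolding zc_def by (rule card_Un_le)
    finally show ?thesis .
  qed
  hence "3 \<le> card {k. k < N \<and> xs ! k}" using z3 n3 unfolding N_def by linarith
  then obtain i j where ij: "i < N" "j < N" "xs ! i" "xs ! j" "i \<noteq> j"
  proof -
    assume th: "\<And>i j. i < N \<Longrightarrow> j < N \<Longrightarrow> xs ! i \<Longrightarrow> xs ! j \<Longrightarrow> i \<noteq> j \<Longrightarrow> ?thesis"
    have "2 \<le> card {k. k < N \<and> xs ! k}" using \<open>3 \<le> card {k. k < N \<and> xs ! k}\<close> by simp
    then obtain T where "T \<subseteq> {k. k < N \<and> xs ! k}" "card T = 2"
      by (meson obtain_subset_with_card_n)
    then obtain a b where "a \<noteq> b" "a \<in> {k. k < N \<and> xs ! k}" "b \<in> {k. k < N \<and> xs ! k}"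
      by (auto simp: card_2_iff)
    then show ?thesis using th by blast
  qed
  define A where "A = {..<N} - {i, j}"
  have cA: "card A = N - 2" unfolding A_def using ij by (simp add: card_Diff_subset)
  obtain idx where idx: "bij_betw idx A {..<N-2}"
    using finite_same_card_bij[of A "{..<N-2}"] cA unfolding A_def by auto
  define wire where "wire p = (if p = i \<or> p = j then N - 2 else idx p)" for p
  define g where "g = \<lparr>gverts = [(N, F)], gdang = N - 2, gint = 1, gwire = (\<lambda>v p. wire p)\<rparr>"
  have ports: "ports g = {(0::nat, p) | p. p < N}" unfolding ports_def g_def by auto
  have Nge: "N \<ge> 6" unfolding N_def using n3 by simp
  have idxA: "idx p < N - 2" if "p \<in> A" for p using idx that by (meson bij_betw_apply lessThan_iff)
  have invA: "inv_into A idx k \<in> A" "idx (inv_into A idx k) = k" if "k < N - 2" for k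
    using idx that by (auto simp: bij_betw_def inv_into_into f_inv_into_f)
  have idxinv: "inv_into A idx (idx p) = p" if "p \<in> A" for p
    using idx that by (simp add: bij_betw_def inv_into_f_f)
  have wf: "gadget_wf (insert (2 * n, F) (mat_sig ` B)) g"
    unfolding gadget_wf_def
  proof (intro conjI allI impI ballI)
    show "set (gverts g) \<subseteq> insert (2 * n, F) (mat_sig ` B)" unfolding g_def N_def by simp
  next
    fix p assume "p \<in> ports g"
    then obtain q where p: "p = (0, q)" "q < N" using ports by auto
    show "gwire g (fst p) (snd p) < gdang g + gint g"
    proof (cases "q = i \<or> q = j")
      case True thus ?thesis using p Nge unfolding g_def wire_def by auto
    next
      case False hence "q \<in> A" using p unfolding A_def by auto
      thus ?thesis using p idxA[of q] False unfolding g_def wire_def by auto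
    qed
  next
    fix k assume k: "k < gdang g"
    hence k': "k < N - 2" unfolding g_def by simp
    have "wire_ports g k = {(0::nat, inv_into A idx k)}"
    proof (rule set_eqI, rule iffI)
      fix p assume "p \<in> wire_ports g k"
      then obtain q where p: "p = (0, q)" "q < N" "wire q = k" using ports
        unfolding wire_ports_def g_def by auto
      have "\<not> (q = i \<or> q = j)" using p k' unfolding wire_def by auto
      hence "q \<in> A" using p unfolding A_def by auto
      hence "q = inv_into A idx k" using p idxinv[of q] \<open>\<not> (q = i \<or> q = j)\<close> unfolding wire_def by auto
      thus "p \<in> {(0::nat, inv_into A idx k)}" using p by simp
    next
      fix p assume "p \<in> {(0::nat, inv_into A idx k)}"
      hence p: "p = (0, inv_into A idx k)" by simp
      have A: "inv_into A idx k \<in> A" using invA k' by blast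
      hence "\<not> (inv_into A idx k = i \<or> inv_into A idx k = j)" "inv_into A idx k < N" unfolding A_def by auto
      thus "p \<in> wire_ports g k" using p invA(2)[OF k'] ports
        unfolding wire_ports_def g_def wire_def by auto
    qed
    thus "card (wire_ports g k) = 1" by simp
  next
    fix k assume k: "gdang g \<le> k \<and> k < gdang g + gint g"
    hence k': "k = N - 2" unfolding g_def using Nge by simp
    have "wire_ports g k = {(0::nat, i), (0, j)}"
    proof (rule set_eqI, rule iffI)
      fix p assume "p \<in> wire_ports g k"
      then obtain q where p: "p = (0, q)" "q < N" "wire q = k" using ports
        unfolding wire_ports_def g_def by auto
      have "q = i \<or> q = j"
      proof (rule ccontr)
        assume nq: "\<not> (q = i \<or> q = j)"
        hence "q \<in> A" using p unfolding A_def by auto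
        thus False using idxA[of q] p nq k' unfolding wire_def by auto
      qed
      thus "p \<in> {(0::nat, i), (0, j)}" using p by auto
    next
      fix p assume "p \<in> {(0::nat, i), (0, j)}"
      thus "p \<in> wire_ports g k" using ij ports k' unfolding wire_ports_def g_def wire_def by auto
    qed
    thus "card (wire_ports g k) = 2" using ij by simp
  qed
  have dlt: "gdang g < 2 * n" unfolding g_def N_def using n3 by simp
  have "in_lamB B (gdang g) (gadget_fn g)" using closed wf dlt by blast
  moreover have "gdang g = N - 2" unfolding g_def by simp
  ultimately have inB: "in_lamB B (N - 2) (gadget_fn g)" by simp
  have gf: "gadget_fn g L = F (map (\<lambda>p. if p = i \<or> p = j then False else L ! idx p) [0..<N])
             + F (map (\<lambda>p. if p = i \<or> p = j then True else L ! idx p) [0..<N])"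
    if "length L = N - 2" for L
  proof -
    have set1: "{ys. length ys = (1::nat)} = {[False], [True]}"
    proof (rule set_eqI)
      fix ys :: "bool list"
      show "ys \<in> {ys. length ys = 1} \<longleftrightarrow> ys \<in> {[False], [True]}"
        by (cases ys) auto
    qed
    have m: "map (\<lambda>p. (L @ [b]) ! wire p) [0..<N] = map (\<lambda>p. if p = i \<or> p = j then b else L ! idx p) [0..<N]" for b
    proof (rule map_cong[OF refl])
      fix p assume "p \<in> set [0..<N]"
      hence pN: "p < N" by simp
      show "(L @ [b]) ! wire p = (if p = i \<or> p = j then b else L ! idx p)"
      proof (cases "p = i \<or> p = j")
        case True thus ?thesis using that unfolding wire_def by (simp add: nth_append)
      next
        case False hence "p \<in> A" using pN unfolding A_def by auto
        thus ?thesis using idxA[of p] that False unfolding wire_def by (simp add: nth_append)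
      qed
    qed
    have "gadget_fn g L = (\<Sum>ys\<in>{ys. length ys = (1::nat)}. F (map (\<lambda>p. (L @ ys) ! wire p) [0..<N]))"
      unfolding gadget_fn_def g_def by simp
    also have "\<dots> = (\<Sum>ys\<in>{[False], [True]}. F (map (\<lambda>p. (L @ ys) ! wire p) [0..<N]))"
      by (simp only: set1)
    also have "\<dots> = F (map (\<lambda>p. (L @ [False]) ! wire p) [0..<N]) + F (map (\<lambda>p. (L @ [True]) ! wire p) [0..<N])"
      by (simp add: sum.insert)
    also have "\<dots> = F (map (\<lambda>p. if p = i \<or> p = j then False else L ! idx p) [0..<N])
             + F (map (\<lambda>p. if p = i \<or> p = j then True else L ! idx p) [0..<N])"
      by (simp only: m)
    finally show ?thesis .
  qed
  define L0 where "L0 = map (\<lambda>k. xs ! inv_into A idx k) [0..<N-2]"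
  have "gadget_fn g (replicate (N-2) False) = 0"
  proof -
    define R where "R = replicate (N-2) False"
    have z: "F (map (\<lambda>p. if p = i \<or> p = j then b else R ! idx p) [0..<N]) = 0" for b
    proof (rule Z4)
      let ?L = "map (\<lambda>p. if p = i \<or> p = j then b else R ! idx p) [0..<N]"
      show "length ?L = N" by simp
      have "A \<subseteq> {k. k < N \<and> \<not> ?L ! k}" using idxA unfolding A_def R_def by auto
      hence "card A \<le> zc ?L" unfolding zc_def by (rule card_mono[rotated]) simp
      thus "4 \<le> zc ?L" using cA Nge by simp
    qed
    have "gadget_fn g R = F (map (\<lambda>p. if p = i \<or> p = j then False else R ! idx p) [0..<N])
             + F (map (\<lambda>p. if p = i \<or> p = j then True else R ! idx p) [0..<N])"
      by (rule gf) (simp add: R_def)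
    also have "\<dots> = 0" unfolding z by simp
    finally show ?thesis unfolding R_def .
  qed
  hence "gadget_fn g L0 = 0"
    using lamB_zero[OF inB] diag unfolding L0_def by simp
  moreover have "gadget_fn g L0 \<noteq> 0"
  proof -
    have lenL0: "length L0 = N - 2" unfolding L0_def by simp
    have L0idx: "L0 ! idx p = xs ! p" if "p \<in> A" for p
      using idxA[OF that] idxinv[OF that] unfolding L0_def by simp
    have T: "map (\<lambda>p. if p = i \<or> p = j then True else L0 ! idx p) [0..<N] = xs"
    proof (rule nth_equalityI)
      show "length (map (\<lambda>p. if p = i \<or> p = j then True else L0 ! idx p) [0..<N]) = length xs"
        using xs by simp
    next
      fix k assume "k < length (map (\<lambda>p. if p = i \<or> p = j then True else L0 ! idx p) [0..<N])"
      hence k: "k < N" by simp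
      show "map (\<lambda>p. if p = i \<or> p = j then True else L0 ! idx p) [0..<N] ! k = xs ! k"
      proof (cases "k = i \<or> k = j")
        case True thus ?thesis using k ij by auto
      next
        case False hence "k \<in> A" using k unfolding A_def by auto
        thus ?thesis using k False L0idx by simp
      qed
    qed
    let ?Lf = "map (\<lambda>p. if p = i \<or> p = j then False else L0 ! idx p) [0..<N]"
    have Fz: "F ?Lf = 0"
    proof (rule ccontr)
      assume "F ?Lf \<noteq> 0"
      hence le: "zc ?Lf \<le> zc xs" using mx by simp
      have "{k. k < N \<and> \<not> ?Lf ! k} = insert i (insert j {k. k < N \<and> \<not> xs ! k})"
      proof (rule set_eqI)
        fix k
        show "k \<in> {k. k < N \<and> \<not> ?Lf ! k} \<longleftrightarrow> k \<in> insert i (insert j {k. k < N \<and> \<not> xs ! k})"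
        proof (cases "k = i \<or> k = j")
          case True thus ?thesis using ij by auto
        next
          case False
          show ?thesis
          proof (cases "k < N")
            case True hence "k \<in> A" using False unfolding A_def by auto
            thus ?thesis using True False L0idx by auto
          next
            case False thus ?thesis using ij by auto
          qed
        qed
      qed
      hence "zc ?Lf = zc xs + 2" unfolding zc_def using ij by simp
      thus False using le by simp
    qed
    have "gadget_fn g L0 = F ?Lf + F (map (\<lambda>p. if p = i \<or> p = j then True else L0 ! idx p) [0..<N])"
      by (rule gf) (rule lenL0)
    also have "\<dots> = F xs" unfolding T Fz by simp
    finally show ?thesis using xs by simp
  qed
  ultimately show False by simp
qed

end
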